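(* Let $q\ge5$ be a prime power and let $\mathcal{C}_\mathscr{C}$ be the $[q+1,q-3,5]_q$ code with parity check matrix whose columns are the vectors $(1,t,t^2,t^3)$, $t\in\mathbb{F}_q$, and $(0,0,0,1)$. The full weight distribution $(B_w(\mathcal{V}))_{0\le w\le q+1}$ of any coset $\mathcal{V}$ of $\mathcal{C}_\mathscr{C}$ is uniquely determined by the weight of $\mathcal{V}$ together with the number $B_3(\mathcal{V})$ of its weight-$3$ vectors; in particular, two cosets of the same weight with the same value of $B_3$ have identical weight distributions.
   Context: A coset of a linear code $\mathcal{C}\subseteq\mathbb{F}_q^n$ is a set $\mathbf{v}+\mathcal{C}$, $\mathbf{v}\in\mathbb{F}_q^n$; its weight is the minimum Hamming weight of its vectors; $B_w(\mathcal{V})$ denotes the number of vectors of Hamming weight $w$ in the coset $\mathcal{V}$. The cosets of $\mathcal{C}_\mathscr{C}$ have weight at most $3$. *)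

theory Defs
  imports Main
begin

text \<open>Coordinates of F_q^(q+1) are indexed by 'a option: Some t for t in F_q,
  None for the extra column (0,0,0,1).  Entry i (i = 0..3) of the parity-check
  column at position p.\<close>
definition pc_col :: "'a::field option \<Rightarrow> nat \<Rightarrow> 'a" where
  "pc_col p i = (case p of Some t \<Rightarrow> t ^ i | None \<Rightarrow> (if i = 3 then 1 else 0))"

definition hamming_wt :: "('b \<Rightarrow> 'a::zero) \<Rightarrow> nat" where
  "hamming_wt v = card {p. v p \<noteq> 0}"

definition code_CC :: "('a::{finite,field} option \<Rightarrow> 'a) set" where
  "code_CC = {v. \<forall>i<4. (\<Sum>p\<in>UNIV. v p * pc_col p i) = 0}"

definition coset_of :: "('b \<Rightarrow> 'a::plus) set \<Rightarrow> ('b \<Rightarrow> 'a) \<Rightarrow> ('b \<Rightarrow> 'a) set" where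
  "coset_of C v = {(\<lambda>p. v p + c p) | c. c \<in> C}"

definition cosets_of :: "('b \<Rightarrow> 'a::plus) set \<Rightarrow> ('b \<Rightarrow> 'a) set set" where
  "cosets_of C = {coset_of C v | v. True}"

definition coset_weight :: "('b \<Rightarrow> 'a::zero) set \<Rightarrow> nat" where
  "coset_weight V = Min (hamming_wt ` V)"

definition B_count :: "nat \<Rightarrow> ('b \<Rightarrow> 'a::zero) set \<Rightarrow> nat" where
  "B_count w V = card {x \<in> V. hamming_wt x = w}"

end

theory Submission
  imports Defs "HOL-Computational_Algebra.Polynomial"
begin


lemma sum_supp:
  assumes "\<And>p. p \<notin> P \<Longrightarrow> f p = 0"
  shows "sum f (UNIV::'b::finite set) = sum f P"
  by (rule sum.mono_neutral_right) (auto simp: assms)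

lemma lt4: "(i::nat) < 4 \<Longrightarrow> i = 0 \<or> i = 1 \<or> i = 2 \<or> i = 3" by auto

lemma L5:
  fixes a b c d e :: "'a::{finite,field}"
  assumes "distinct [a,b,c,d,e]"
  shows "\<exists>v\<in>code_CC. v (Some a) \<noteq> 0 \<and> (\<forall>p. p \<notin> {Some a, Some b, Some c, Some d, Some e} \<longrightarrow> v p = 0)"
proof -
  define A where "A = (b-c)*(b-d)*(b-e)*(c-d)*(c-e)*(d-e)"
  define B where "B = (a-c)*(a-d)*(a-e)*(c-d)*(c-e)*(d-e)"
  define C where "C = (a-b)*(a-d)*(a-e)*(b-d)*(b-e)*(d-e)"
  define D where "D = (a-b)*(a-c)*(a-e)*(b-c)*(b-e)*(c-e)"
  define E where "E = (a-b)*(a-c)*(a-d)*(b-c)*(b-d)*(c-d)"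
  define v where "v = (\<lambda>p. if p = Some a then A else if p = Some b then -B else if p = Some c then C
     else if p = Some d then -D else if p = Some e then E else 0)"
  have supp: "\<forall>p. p \<notin> {Some a, Some b, Some c, Some d, Some e} \<longrightarrow> v p = 0"
    by (auto simp: v_def)
  have "v \<in> code_CC"
    unfolding code_CC_def
  proof (intro CollectI allI impI)
    have ne: "a \<noteq> b" "a \<noteq> c" "a \<noteq> d" "a \<noteq> e" "b \<noteq> c" "b \<noteq> d" "b \<noteq> e" "c \<noteq> d" "c \<noteq> e" "d \<noteq> e"
      using assms by auto
    fix i :: nat assume "i < 4"
    have "(\<Sum>p\<in>UNIV. v p * pc_col p i) = (\<Sum>p\<in>{Some a, Some b, Some c, Some d, Some e}. v p * pc_col p i)"
      by (rule sum_supp) (use supp in auto)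
    also have "\<dots> = A * a^i - B * b^i + C * c^i - D * d^i + E * e^i"
      using ne ne[symmetric] by (simp add: v_def pc_col_def)
    also have "\<dots> = 0"
      using lt4[OF \<open>i < 4\<close>] unfolding A_def B_def C_def D_def E_def
      by (elim disjE) (simp_all add: algebra_simps power3_eq_cube power2_eq_square)
    finally show "(\<Sum>p\<in>UNIV. v p * pc_col p i) = 0" .
  qed
  moreover have "v (Some a) \<noteq> 0" using assms by (simp add: v_def A_def)
  ultimately show ?thesis using supp by blast
qed

lemma L4:
  fixes a b c d :: "'a::{finite,field}"
  assumes "distinct [a,b,c,d]"
  shows "\<exists>v\<in>code_CC. v (Some a) \<noteq> 0 \<and> v None \<noteq> 0 \<and> (\<forall>p. p \<notin> {None, Some a, Some b, Some c, Some d} \<longrightarrow> v p = 0)"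
proof -
  define A where "A = (b-c)*(b-d)*(c-d)"
  define B where "B = (a-c)*(a-d)*(c-d)"
  define C where "C = (a-b)*(a-d)*(b-d)"
  define D where "D = (a-b)*(a-c)*(b-c)"
  define E where "E = (a-b)*(a-c)*(a-d)*(b-c)*(b-d)*(c-d)"
  define v where "v = (\<lambda>p. if p = Some a then A else if p = Some b then -B else if p = Some c then C
     else if p = Some d then -D else if p = None then -E else 0)"
  have supp: "\<forall>p. p \<notin> {None, Some a, Some b, Some c, Some d} \<longrightarrow> v p = 0"
    by (auto simp: v_def)
  have "v \<in> code_CC"
    unfolding code_CC_def
  proof (intro CollectI allI impI)
    have ne: "a \<noteq> b" "a \<noteq> c" "a \<noteq> d" "b \<noteq> c" "b \<noteq> d" "c \<noteq> d"
      using assms by auto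
    fix i :: nat assume "i < 4"
    have "(\<Sum>p\<in>UNIV. v p * pc_col p i) = (\<Sum>p\<in>{None, Some a, Some b, Some c, Some d}. v p * pc_col p i)"
      by (rule sum_supp) (use supp in auto)
    also have "\<dots> = A * a^i - B * b^i + C * c^i - D * d^i - E * (if i = 3 then 1 else 0)"
      using ne ne[symmetric] by (simp add: v_def pc_col_def)
    also have "\<dots> = 0"
      using lt4[OF \<open>i < 4\<close>] unfolding A_def B_def C_def D_def E_def
      by (elim disjE) (simp_all add: algebra_simps power3_eq_cube power2_eq_square)
    finally show "(\<Sum>p\<in>UNIV. v p * pc_col p i) = 0" .
  qed
  moreover have "v (Some a) \<noteq> 0" using assms by (simp add: v_def A_def)
  moreover have "v None \<noteq> 0" using assms by (simp add: v_def E_def)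
  ultimately show ?thesis using supp by blast
qed


lemma card4: "card (S::'b set) = 4 \<Longrightarrow> \<exists>a b c d. S = {a,b,c,d} \<and> distinct [a,b,c,d]"
  by (auto simp: card_Suc_eq numeral_eq_Suc)

lemma card3: "card (S::'b set) = 3 \<Longrightarrow> \<exists>a b c. S = {a,b,c} \<and> distinct [a,b,c]"
  by (auto simp: card_Suc_eq numeral_eq_Suc)

lemma code_sum:
  assumes "\<forall>j\<in>J. e j \<in> code_CC"
  shows "(\<lambda>p. \<Sum>j\<in>J. f j * e j p) \<in> (code_CC :: ('a::{finite,field} option \<Rightarrow> 'a) set)"
  unfolding code_CC_def
proof (intro CollectI allI impI)
  fix i :: nat assume i: "i < 4"
  have "(\<Sum>p\<in>UNIV. (\<Sum>j\<in>J. f j * e j p) * pc_col p i) = (\<Sum>p\<in>UNIV. \<Sum>j\<in>J. f j * (e j p * pc_col p i))"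
    by (simp add: sum_distrib_right mult.assoc)
  also have "\<dots> = (\<Sum>j\<in>J. f j * (\<Sum>p\<in>UNIV. e j p * pc_col p i))"
    by (subst sum.swap) (simp add: sum_distrib_left)
  also have "\<dots> = 0" using assms i by (simp add: code_CC_def)
  finally show "(\<Sum>p\<in>UNIV. (\<Sum>j\<in>J. f j * e j p) * pc_col p i) = 0" .
qed

lemma code_add:
  assumes "x \<in> code_CC" "y \<in> code_CC"
  shows "(\<lambda>p. x p + y p) \<in> (code_CC :: ('a::{finite,field} option \<Rightarrow> 'a) set)"
  using assms by (simp add: code_CC_def distrib_right sum.distrib)

lemma code_diff:
  assumes "x \<in> code_CC" "y \<in> code_CC"
  shows "(\<lambda>p. x p - y p) \<in> (code_CC :: ('a::{finite,field} option \<Rightarrow> 'a) set)"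
  using assms by (simp add: code_CC_def left_diff_distrib sum_subtractf)

lemma code_scale:
  assumes "x \<in> code_CC"
  shows "(\<lambda>p. k * x p) \<in> (code_CC :: ('a::{finite,field} option \<Rightarrow> 'a) set)"
  using assms by (simp add: code_CC_def mult.assoc sum_distrib_left[symmetric])

lemma code_comb:
  assumes "c \<in> (code_CC :: ('a::{finite,field} option \<Rightarrow> 'a) set)"
  shows "(\<Sum>p\<in>UNIV. c p * (\<Sum>i<4. \<alpha> i * pc_col p i)) = 0"
proof -
  have "(\<Sum>p\<in>UNIV. c p * (\<Sum>i<4. \<alpha> i * pc_col p i)) = (\<Sum>p\<in>UNIV. \<Sum>i<4. \<alpha> i * (c p * pc_col p i))"
    by (simp add: sum_distrib_left mult.commute mult.left_commute)
  also have "\<dots> = (\<Sum>i<4. \<alpha> i * (\<Sum>p\<in>UNIV. c p * pc_col p i))"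
    by (subst sum.swap) (simp add: sum_distrib_left)
  also have "\<dots> = 0" using assms by (simp add: code_CC_def)
  finally show ?thesis .
qed

lemma mindist:
  assumes c: "c \<in> (code_CC :: ('a::{finite,field} option \<Rightarrow> 'a) set)"
    and card: "card {p. c p \<noteq> 0} \<le> 4"
  shows "c = (\<lambda>p. 0)"
proof -
  define P where "P = {p. c p \<noteq> 0}"
  have fP: "finite P" by simp
  have some: "c (Some a) = 0" for a
  proof (rule ccontr)
    assume ca: "c (Some a) \<noteq> 0"
    hence aP: "Some a \<in> P" by (simp add: P_def)
    define B where "B = {u. Some u \<in> P \<and> u \<noteq> a}"
    have fB: "finite B" by simp
    have SB: "Some ` B \<subseteq> P - {Some a}" by (auto simp: B_def)
    have cB: "card B = card (Some ` B)" by (simp add: card_image)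
    have cB3: "card B \<le> 3"
    proof -
      have "card (Some ` B) \<le> card (P - {Some a})" by (rule card_mono) (use SB in auto)
      also have "\<dots> = card P - 1" using aP by simp
      finally show ?thesis using card cB unfolding P_def by simp
    qed
    have cB2: "None \<in> P \<Longrightarrow> card B \<le> 2"
    proof -
      assume nP: "None \<in> P"
      have "Some ` B \<subseteq> P - {Some a} - {None}" using SB by auto
      hence "card (Some ` B) \<le> card (P - {Some a} - {None})" by (intro card_mono) auto
      also have "\<dots> = card P - 2" using aP nP by simp
      finally show ?thesis using card cB unfolding P_def by simp
    qed
    define g where "g = (\<Prod>u\<in>B. [:-u, 1:])"
    have dg: "degree g = card B"
      unfolding g_def by (subst degree_prod_sum_eq) auto
    define G where "G p = (\<Sum>i<4. coeff g i * pc_col p i)" for p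
    have GS: "G (Some t) = poly g t" for t
    proof -
      have "poly g t = (\<Sum>i\<le>degree g. coeff g i * t ^ i)" by (rule poly_altdef)
      also have "\<dots> = (\<Sum>i<4. coeff g i * t ^ i)"
        by (rule sum.mono_neutral_left) (use dg cB3 in \<open>auto intro: coeff_eq_0\<close>)
      finally show ?thesis by (simp add: G_def pc_col_def)
    qed
    have pcN: "pc_col None i = (if i = 3 then 1 else 0)" for i :: nat
      by (simp add: pc_col_def)
    have GN: "G None = coeff g 3"
      by (simp add: G_def pcN numeral_eq_Suc lessThan_Suc)
    have polyg: "poly g t = (\<Prod>u\<in>B. t - u)" for t
      unfolding g_def by (simp add: poly_prod)
    have "0 = (\<Sum>p\<in>UNIV. c p * G p)" using code_comb[OF c] by (simp add: G_def)
    also have "\<dots> = (\<Sum>p\<in>P. c p * G p)" by (rule sum_supp) (simp add: P_def)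
    also have "\<dots> = c (Some a) * G (Some a) + (\<Sum>p\<in>P - {Some a}. c p * G p)"
      using aP fP by (simp add: sum.remove)
    also have "(\<Sum>p\<in>P - {Some a}. c p * G p) = 0"
    proof (rule sum.neutral, rule ballI)
      fix p assume p: "p \<in> P - {Some a}"
      show "c p * G p = 0"
      proof (cases p)
        case None
        hence "None \<in> P" using p by simp
        hence "degree g < 3" using cB2 dg by simp
        hence "coeff g 3 = 0" by (rule coeff_eq_0)
        thus ?thesis using None GN by simp
      next
        case (Some u)
        hence "u \<in> B" using p by (auto simp: B_def)
        hence "poly g u = 0" using fB by (simp add: polyg prod_zero_iff)
        thus ?thesis using Some GS by simp
      qed
    qed
    finally have "c (Some a) * G (Some a) = 0" by simp
    moreover have "G (Some a) \<noteq> 0"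
      using fB by (simp add: GS polyg prod_zero_iff B_def)
    ultimately show False using ca by simp
  qed
  have "(\<Sum>p\<in>UNIV. c p * pc_col p 3) = 0" using c by (simp add: code_CC_def)
  moreover have "(\<Sum>p\<in>UNIV. c p * pc_col p 3) = (\<Sum>p\<in>{None}. c p * pc_col p 3)"
    by (rule sum_supp) (metis not_None_eq singletonI some mult_zero_left)
  ultimately have "c None = 0" by (simp add: pc_col_def)
  with some show ?thesis by (auto intro!: ext simp: split: option.split) (metis option.exhaust)
qed


lemma pos5:
  fixes P :: "'a::{finite,field} option set"
  assumes cP: "card P = 5" and p0: "p0 \<in> P"
  shows "\<exists>v\<in>code_CC. v p0 \<noteq> 0 \<and> (\<forall>p. p \<notin> P \<longrightarrow> v p = 0)"
proof -
  define T where "T = {u. Some u \<in> P}"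
  have ST: "Some ` T = P - {None}"
  proof (rule set_eqI)
    fix x show "x \<in> Some ` T \<longleftrightarrow> x \<in> P - {None}" by (cases x) (auto simp: T_def)
  qed
  have "card (Some ` T) = card T" by (rule card_image) simp
  hence cT: "card T = card (P - {None})" using ST by simp
  show ?thesis
  proof (cases "None \<in> P")
    case False
    hence cT5: "card T = 5" using cT cP by simp
    obtain a where a: "p0 = Some a" using p0 False by (cases p0) auto
    have aT: "a \<in> T" using a p0 by (simp add: T_def)
    have "card (T - {a}) = 4" using cT5 aT by simp
    then obtain b c d e where bcde: "T - {a} = {b,c,d,e}" "distinct [b,c,d,e]" using card4 by blast
    have dis: "distinct [a,b,c,d,e]" using bcde by (auto dest: equalityD2)
    have inP: "Some a \<in> P" "Some b \<in> P" "Some c \<in> P" "Some d \<in> P" "Some e \<in> P"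
      using aT bcde(1) unfolding T_def by blast+
    obtain v where v: "v \<in> code_CC" "v (Some a) \<noteq> 0"
        "\<forall>p. p \<notin> {Some a, Some b, Some c, Some d, Some e} \<longrightarrow> v p = 0"
      using L5[OF dis] by blast
    have "\<forall>p. p \<notin> P \<longrightarrow> v p = 0"
    proof (intro allI impI)
      fix p assume "p \<notin> P"
      hence "p \<notin> {Some a, Some b, Some c, Some d, Some e}" using inP by blast
      thus "v p = 0" using v(3) by simp
    qed
    thus ?thesis using v a by blast
  next
    case True
    hence cT4: "card T = 4" using cT cP by simp
    show ?thesis
    proof (cases p0)
      case None
      obtain a b c d where abcd: "T = {a,b,c,d}" "distinct [a,b,c,d]" using card4[OF cT4] by blast
      have inP: "Some a \<in> P" "Some b \<in> P" "Some c \<in> P" "Some d \<in> P"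
        using abcd(1) unfolding T_def by blast+
      obtain v where v: "v \<in> code_CC" "v None \<noteq> 0"
          "\<forall>p. p \<notin> {None, Some a, Some b, Some c, Some d} \<longrightarrow> v p = 0"
        using L4[OF abcd(2)] by blast
      have "\<forall>p. p \<notin> P \<longrightarrow> v p = 0"
      proof (intro allI impI)
        fix p assume "p \<notin> P"
        hence "p \<notin> {None, Some a, Some b, Some c, Some d}" using inP True by blast
        thus "v p = 0" using v(3) by simp
      qed
      thus ?thesis using v None by blast
    next
      case (Some a)
      have aT: "a \<in> T" using Some p0 by (simp add: T_def)
      have "card (T - {a}) = 3" using cT4 aT by simp
      then obtain b c d where bcd: "T - {a} = {b,c,d}" "distinct [b,c,d]" using card3 by blast
      have dis: "distinct [a,b,c,d]" using bcd by (auto dest: equalityD2)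
      have inP: "Some a \<in> P" "Some b \<in> P" "Some c \<in> P" "Some d \<in> P"
        using aT bcd(1) unfolding T_def by blast+
      obtain v where v: "v \<in> code_CC" "v (Some a) \<noteq> 0"
          "\<forall>p. p \<notin> {None, Some a, Some b, Some c, Some d} \<longrightarrow> v p = 0"
        using L4[OF dis] by blast
      have "\<forall>p. p \<notin> P \<longrightarrow> v p = 0"
      proof (intro allI impI)
        fix p assume "p \<notin> P"
        hence "p \<notin> {None, Some a, Some b, Some c, Some d}" using inP True by blast
        thus "v p = 0" using v(3) by simp
      qed
      thus ?thesis using v Some by blast
    qed
  qed
qed


lemma unit_vec:
  fixes S :: "'a::{finite,field} option set"
  assumes "p0 \<notin> S" "card S = 4"
  shows "\<exists>e\<in>code_CC. e p0 = 1 \<and> (\<forall>p. p \<notin> insert p0 S \<longrightarrow> e p = 0)"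
proof -
  have "card (insert p0 S) = 5" using assms by simp
  then obtain v where v: "v \<in> code_CC" "v p0 \<noteq> 0" "\<forall>p. p \<notin> insert p0 S \<longrightarrow> v p = 0"
    using pos5[of "insert p0 S" p0] by blast
  show ?thesis
    using v code_scale[OF v(1), of "inverse (v p0)"]
    by (intro bexI[of _ "\<lambda>p. inverse (v p0) * v p"]) auto
qed

lemma surj:
  fixes J :: "'a::{finite,field} option set" and y :: "'a option \<Rightarrow> 'a"
  assumes "card J + 4 \<le> card (UNIV :: 'a option set)"
  shows "\<exists>c\<in>code_CC. \<forall>p\<in>J. c p = y p"
proof -
  have "card (UNIV - J) = card (UNIV :: 'a option set) - card J" by (simp add: card_Diff_subset)
  hence "4 \<le> card (UNIV - J)" using assms by simp
  then obtain S where S: "S \<subseteq> UNIV - J" "card S = 4" by (rule obtain_subset_with_card_n)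
  have "\<forall>j\<in>J. \<exists>e. e \<in> code_CC \<and> e j = 1 \<and> (\<forall>p. p \<notin> insert j S \<longrightarrow> e p = 0)"
    using unit_vec S by blast
  then obtain E where E: "\<forall>j\<in>J. E j \<in> code_CC \<and> E j j = 1 \<and> (\<forall>p. p \<notin> insert j S \<longrightarrow> E j p = 0)"
    by metis
  define c where "c = (\<lambda>p. \<Sum>j\<in>J. y j * E j p)"
  have "c \<in> code_CC" unfolding c_def by (rule code_sum) (use E in blast)
  moreover have "c p = y p" if p: "p \<in> J" for p
  proof -
    have pS: "p \<notin> S" using S p by auto
    have "c p = y p * E p p + (\<Sum>j\<in>J - {p}. y j * E j p)"
      unfolding c_def using p by (simp add: sum.remove)
    moreover have "(\<Sum>j\<in>J - {p}. y j * E j p) = 0"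
      by (rule sum.neutral) (use E pS in auto)
    ultimately show ?thesis using E p by simp
  qed
  ultimately show ?thesis by blast
qed

lemma fiber:
  fixes J :: "'a::{finite,field} option set" and v :: "'a option \<Rightarrow> 'a"
  assumes "card J + 4 \<le> card (UNIV :: 'a option set)"
  shows "card {x \<in> coset_of code_CC v. \<forall>p\<in>J. x p = 0} = card {c \<in> code_CC. \<forall>p\<in>J. c p = 0}"
proof -
  obtain c0 where c0: "c0 \<in> code_CC" "\<forall>p\<in>J. c0 p = - v p"
    using surj[OF assms, of "\<lambda>p. - v p"] by blast
  define h where "h = (\<lambda>c p. v p + (c0 p + c p))"
  have inj: "inj_on h X" for X
    unfolding h_def inj_on_def by (auto simp: fun_eq_iff)
  have "{x \<in> coset_of code_CC v. \<forall>p\<in>J. x p = 0} = h ` {c \<in> code_CC. \<forall>p\<in>J. c p = 0}"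
  proof (intro equalityI subsetI)
    fix x assume "x \<in> {x \<in> coset_of code_CC v. \<forall>p\<in>J. x p = 0}"
    then obtain c' where c': "c' \<in> code_CC" "x = (\<lambda>p. v p + c' p)" "\<forall>p\<in>J. x p = 0"
      by (auto simp: coset_of_def)
    have "(\<lambda>p. c' p - c0 p) \<in> code_CC" by (rule code_diff) (use c' c0 in auto)
    moreover have "\<forall>p\<in>J. c' p - c0 p = 0" using c' c0
      by (auto simp: algebra_simps)
    moreover have "x = h (\<lambda>p. c' p - c0 p)" using c' by (simp add: h_def)
    ultimately show "x \<in> h ` {c \<in> code_CC. \<forall>p\<in>J. c p = 0}" by blast
  next
    fix x assume "x \<in> h ` {c \<in> code_CC. \<forall>p\<in>J. c p = 0}"
    then obtain c where c: "c \<in> code_CC" "\<forall>p\<in>J. c p = 0" "x = h c" by blast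
    have "(\<lambda>p. c0 p + c p) \<in> code_CC" by (rule code_add) (use c c0 in auto)
    hence "x = (\<lambda>p. v p + (\<lambda>p. c0 p + c p) p) \<and> (\<lambda>p. c0 p + c p) \<in> code_CC" using c(3) by (simp add: h_def)
    hence "x \<in> coset_of code_CC v" unfolding coset_of_def mem_Collect_eq
      by (intro exI[of _ "\<lambda>p. c0 p + c p"]) simp
    moreover have "\<forall>p\<in>J. x p = 0" using c c0 by (simp add: h_def)
    ultimately show "x \<in> {x \<in> coset_of code_CC v. \<forall>p\<in>J. x p = 0}" by blast
  qed
  thus ?thesis by (simp add: card_image inj)
qed


lemma cfs: "finite A \<Longrightarrow> card {x\<in>A. P x} = (\<Sum>x\<in>A. if P x then 1 else 0)"
  using sum.inter_filter[of A "\<lambda>_. (1::nat)" P] by simp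
lemma dc:
  fixes V :: "('b::finite \<Rightarrow> 'a::{zero,finite}) set"
  shows "(\<Sum>J\<in>{J. card J = j}. card {x\<in>V. \<forall>p\<in>J. x p = 0}) = (\<Sum>x\<in>V. card {p. x p = 0} choose j)"
proof -
  have "(\<Sum>J\<in>{J. card J = j}. card {x\<in>V. \<forall>p\<in>J. x p = 0})
      = (\<Sum>J\<in>{J. card J = j}. \<Sum>x\<in>V. if J \<subseteq> {p. x p = 0} then 1 else 0)"
  proof (rule sum.cong[OF refl])
    fix J :: "'b set"
    have "{x\<in>V. \<forall>p\<in>J. x p = 0} = {x\<in>V. J \<subseteq> {p. x p = 0}}" by blast
    thus "card {x\<in>V. \<forall>p\<in>J. x p = 0} = (\<Sum>x\<in>V. if J \<subseteq> {p. x p = 0} then 1 else 0)"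
      by (simp only: cfs[OF finite])
  qed
  also have "\<dots> = (\<Sum>x\<in>V. \<Sum>J\<in>{J. card J = j}. if J \<subseteq> {p. x p = 0} then 1 else 0)"
    by (rule sum.swap)
  also have "\<dots> = (\<Sum>x\<in>V. card {p. x p = 0} choose j)"
  proof (rule sum.cong[OF refl])
    fix x assume "x \<in> V"
    have "(\<Sum>J\<in>{J. card J = j}. if J \<subseteq> {p. x p = 0} then 1 else 0)
        = card {J \<in> {J. card J = j}. J \<subseteq> {p. x p = 0}}"
      by (simp only: cfs[OF finite])
    also have "{J \<in> {J. card J = j}. J \<subseteq> {p. x p = 0}} = {J. J \<subseteq> {p. x p = 0} \<and> card J = j}" by blast
    also have "card \<dots> = card {p. x p = 0} choose j" by (rule n_subsets) simp
    finally show "(\<Sum>J\<in>{J. card J = j}. if J \<subseteq> {p. x p = 0} then 1 else 0) = card {p. x p = 0} choose j" .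
  qed
  finally show ?thesis .
qed

lemma wt_le: "hamming_wt (x :: 'b::finite \<Rightarrow> 'a::zero) \<le> card (UNIV :: 'b set)"
  unfolding hamming_wt_def by (rule card_mono) auto

lemma card_zeros: "card {p. (x :: 'b::finite \<Rightarrow> 'a::zero) p = 0} = card (UNIV :: 'b set) - hamming_wt x"
proof -
  have "{p. x p = 0} = UNIV - {p. x p \<noteq> 0}" by auto
  thus ?thesis unfolding hamming_wt_def by (simp add: card_Diff_subset)
qed

lemma group_wt:
  fixes V :: "('b::finite \<Rightarrow> 'a::{zero,finite}) set"
  shows "(\<Sum>x\<in>V. f (hamming_wt x)) = (\<Sum>w\<le>card (UNIV :: 'b set). f w * B_count w V)"
proof -
  have "(\<Sum>x\<in>V. f (hamming_wt x)) = (\<Sum>w\<in>{..card (UNIV :: 'b set)}. \<Sum>x\<in>{x\<in>V. hamming_wt x = w}. f (hamming_wt x))"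
    by (rule sum.group[symmetric]) (auto simp: wt_le)
  also have "\<dots> = (\<Sum>w\<le>card (UNIV :: 'b set). f w * B_count w V)"
    by (intro sum.cong refl) (simp add: B_count_def)
  finally show ?thesis .
qed

lemma wt_diff: "hamming_wt (\<lambda>p::'b::finite. (x p :: 'a::ab_group_add) - y p) \<le> hamming_wt x + hamming_wt y"
proof -
  have "{p. x p - y p \<noteq> 0} \<subseteq> {p. x p \<noteq> 0} \<union> {p. y p \<noteq> 0}" by auto
  hence "card {p. x p - y p \<noteq> 0} \<le> card ({p. x p \<noteq> 0} \<union> {p. y p \<noteq> 0})" by (intro card_mono) auto
  also have "\<dots> \<le> card {p. x p \<noteq> 0} + card {p. y p \<noteq> 0}" by (rule card_Un_le)
  finally show ?thesis unfolding hamming_wt_def .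
qed

lemma coset_close:
  fixes V :: "('a::{finite,field} option \<Rightarrow> 'a) set"
  assumes V: "V = coset_of code_CC v" and x: "x \<in> V" and y: "y \<in> V"
    and le: "hamming_wt x + hamming_wt y \<le> 4"
  shows "x = y"
proof -
  obtain c1 where c1: "c1 \<in> code_CC" "x = (\<lambda>p. v p + c1 p)" using x V by (auto simp: coset_of_def)
  obtain c2 where c2: "c2 \<in> code_CC" "y = (\<lambda>p. v p + c2 p)" using y V by (auto simp: coset_of_def)
  have d: "(\<lambda>p. x p - y p) = (\<lambda>p. c1 p - c2 p)" unfolding c1(2) c2(2) by (simp add: fun_eq_iff)
  have "(\<lambda>p. c1 p - c2 p) \<in> code_CC" by (rule code_diff) (use c1 c2 in auto)
  moreover have "hamming_wt (\<lambda>p. c1 p - c2 p) = hamming_wt (\<lambda>p. x p - y p)" by (simp only: d)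
  hence "card {p. c1 p - c2 p \<noteq> 0} \<le> 4"
    using wt_diff[of x y] le unfolding hamming_wt_def by simp
  ultimately have z: "(\<lambda>p. c1 p - c2 p) = (\<lambda>p. 0)" by (rule mindist)
  have "x p = y p" for p using fun_cong[OF d, of p] fun_cong[OF z, of p] by simp
  thus ?thesis by (intro ext)
qed

lemma coset_low:
  fixes V :: "('a::{finite,field} option \<Rightarrow> 'a) set"
  assumes V: "V = coset_of code_CC v" and w: "w \<le> 2"
  shows "B_count w V = (if w = coset_weight V then 1 else 0)"
proof -
  have vV: "v \<in> V" unfolding V coset_of_def
    by (rule CollectI, rule exI[of _ "\<lambda>p. 0"]) (simp add: code_CC_def)
  define m where "m = coset_weight V"
  have fin: "finite (hamming_wt ` V)" by simp
  have "m \<in> hamming_wt ` V" unfolding m_def coset_weight_def using vV fin by (intro Min_in) auto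
  then obtain x0 where x0: "x0 \<in> V" "hamming_wt x0 = m" by auto
  have mle: "m \<le> hamming_wt x" if "x \<in> V" for x
    unfolding m_def coset_weight_def using that fin by (intro Min_le) auto
  show ?thesis
  proof (cases "w = m")
    case True
    have "{x \<in> V. hamming_wt x = w} = {x0}"
    proof (intro equalityI subsetI)
      fix x assume "x \<in> {x \<in> V. hamming_wt x = w}"
      hence xV: "x \<in> V" and xw: "hamming_wt x = w" by auto
      have "x = x0" by (rule coset_close[OF V xV x0(1)]) (use x0 True w xw in simp)
      thus "x \<in> {x0}" by simp
    qed (use x0 True in auto)
    thus ?thesis using True by (simp add: B_count_def m_def)
  next
    case False
    have "{x \<in> V. hamming_wt x = w} = {}"
    proof (intro equalityI subsetI)
      fix x assume "x \<in> {x \<in> V. hamming_wt x = w}"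
      hence xV: "x \<in> V" and xw: "hamming_wt x = w" by auto
      have "m \<le> w" using mle[OF xV] xw by simp
      hence "m < w" using False by simp
      hence "x = x0" by (intro coset_close[OF V xV x0(1)]) (use x0 xw w in simp)
      thus "x \<in> {}" using xw x0 False by simp
    qed simp
    thus ?thesis using False by (simp add: B_count_def m_def)
  qed
qed

theorem theorem3p5:
  fixes V W :: "('a::{finite,field} option \<Rightarrow> 'a) set"
  assumes "card (UNIV :: 'a set) \<ge> 5"
    and "V \<in> cosets_of code_CC" and "W \<in> cosets_of code_CC"
    and "coset_weight V = coset_weight W"
    and "B_count 3 V = B_count 3 W"
  shows "\<forall>w. B_count w V = B_count w W"
proof -
  define n where "n = card (UNIV :: 'a option set)"
  obtain v where v: "V = coset_of code_CC v" using assms(2) by (auto simp: cosets_of_def)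
  obtain u where u: "W = coset_of code_CC u" using assms(3) by (auto simp: cosets_of_def)
  define F where "F X j = (\<Sum>w\<le>n. ((n - w) choose j) * B_count w X)"
    for X :: "('a option \<Rightarrow> 'a) set" and j
  have Fc: "F (coset_of code_CC z) j = (\<Sum>J\<in>{J. card J = j}. card {c \<in> (code_CC :: ('a option \<Rightarrow> 'a) set). \<forall>p\<in>J. c p = 0})"
    if j: "j + 4 \<le> n" for z j
  proof -
    have "F (coset_of code_CC z) j = (\<Sum>x\<in>coset_of code_CC z. (n - hamming_wt x) choose j)"
      unfolding F_def n_def by (rule group_wt[symmetric])
    also have "\<dots> = (\<Sum>x\<in>coset_of code_CC z. card {p. x p = 0} choose j)"
      by (simp add: card_zeros n_def)
    also have "\<dots> = (\<Sum>J\<in>{J. card J = j}. card {x\<in>coset_of code_CC z. \<forall>p\<in>J. x p = 0})"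
      by (rule dc[symmetric])
    also have "\<dots> = (\<Sum>J\<in>{J. card J = j}. card {c \<in> (code_CC :: ('a option \<Rightarrow> 'a) set). \<forall>p\<in>J. c p = 0})"
    proof (rule sum.cong[OF refl])
      fix J :: "'a option set" assume "J \<in> {J. card J = j}"
      thus "card {x\<in>coset_of code_CC z. \<forall>p\<in>J. x p = 0} = card {c \<in> code_CC. \<forall>p\<in>J. c p = 0}"
        by (intro fiber) (use j in \<open>simp add: n_def\<close>)
    qed
    finally show ?thesis .
  qed
  have FVW: "F V j = F W j" if "j + 4 \<le> n" for j
    using Fc[OF that] v u by simp
  have big: "B_count w X = 0" if "n < w" for w and X :: "('a option \<Rightarrow> 'a) set"
  proof -
    have "hamming_wt x \<le> n" for x :: "'a option \<Rightarrow> 'a" unfolding n_def by (rule wt_le)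
    hence "{x \<in> X. hamming_wt x = w} = {}" using that by (auto dest: leD)
    thus ?thesis by (simp add: B_count_def)
  qed
  have low: "B_count w V = B_count w W" if "w \<le> 3" for w
  proof (cases "w = 3")
    case True thus ?thesis using assms(5) by simp
  next
    case False
    hence "w \<le> 2" using that by simp
    thus ?thesis using coset_low[OF v] coset_low[OF u] assms(4) by simp
  qed
  have "B_count w V = B_count w W" for w
  proof (induction w rule: less_induct)
    case (less w)
    show ?case
    proof (cases "w \<le> 3")
      case True thus ?thesis by (rule low)
    next
      case False
      show ?thesis
      proof (cases "n < w")
        case True thus ?thesis using big by simp
      next
        case False': False
        hence wn: "w \<le> n" by simp
        have split: "F X (n - w) = (\<Sum>w'<w. ((n - w') choose (n - w)) * B_count w' X) + B_count w X"
          for X :: "('a option \<Rightarrow> 'a) set"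
        proof -
          have dec: "{..n} = {..<w} \<union> insert w {w<..n}" using wn by auto
          have "F X (n - w) = (\<Sum>w'<w. ((n - w') choose (n - w)) * B_count w' X)
              + (((n - w) choose (n - w)) * B_count w X
              + (\<Sum>w'\<in>{w<..n}. ((n - w') choose (n - w)) * B_count w' X))"
            unfolding F_def dec by (subst sum.union_disjoint) auto
          moreover have "(\<Sum>w'\<in>{w<..n}. ((n - w') choose (n - w)) * B_count w' X) = 0"
            by (rule sum.neutral) (use wn in auto)
          ultimately show ?thesis by simp
        qed
        have "(\<Sum>w'<w. ((n - w') choose (n - w)) * B_count w' V)
            = (\<Sum>w'<w. ((n - w') choose (n - w)) * B_count w' W)"
          by (intro sum.cong refl) (simp add: less.IH)
        moreover have "F V (n - w) = F W (n - w)" by (rule FVW) (use False wn in simp)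
        ultimately show ?thesis using split[of V] split[of W] by linarith
      qed
    qed
  qed
  thus ?thesis by simp
qed

end
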